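(* (A weighted, repeated argument sum simplification.) For complex numbers $x_0,\dots,x_q$ (repetitions allowed), $q\ge0$, and $\tau\in\mathbb{R}$, $$\sum_{j=0}^q x_j\,e^{-\tau[x_0,\ldots,x_q,x_j]}=\Big(\tau\frac{\partial}{\partial\tau}-q\Big)e^{-\tau[x_0,\ldots,x_q]}.$$
   Context: For $t\in\mathbb{R}$ and numbers $y_0,\dots,y_p$ (repetitions allowed), $e^{t[y_0,\ldots,y_p]}$ denotes the divided difference of $f(x)=e^{tx}$, $f[y_0,\ldots,y_p]=\frac{1}{2\pi i}\oint_\Gamma\frac{f(x)}{\prod_{i=0}^p(x-y_i)}\,\mathrm{d}x$, $\Gamma$ a positively oriented contour enclosing all $y_i$. The multiset $[x_0,\ldots,x_q,x_j]$ contains $x_j$ twice. *)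

theory Defs
  imports "HOL-Complex_Analysis.Complex_Analysis"
begin

text \<open>Divided difference of f(x) = exp(t x) at the (multi)list of nodes ys, defined by
  the contour integral (1/(2 pi i)) \<ointegral> f(z) / \<Prod>(z - y_i) dz over a positively oriented
  circle enclosing all nodes (radius 1 + sum of the moduli of the nodes).\<close>
definition exp_divdiff :: "real \<Rightarrow> complex list \<Rightarrow> complex" where
  "exp_divdiff t ys =
     contour_integral (circlepath 0 (1 + (\<Sum>y\<leftarrow>ys. norm y)))
       (\<lambda>z. exp (complex_of_real t * z) / (\<Prod>y\<leftarrow>ys. (z - y))) / (2 * complex_of_real pi * \<i>)"

end

theory Submission
  imports Defs
begin

lemma circ_indep:
  fixes K :: "complex set"
  assumes K: "finite K" and f: "f holomorphic_on -K" and Kr: "\<And>y. y\<in>K \<Longrightarrow> norm y < r1"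
    and r: "0 < r1" "r1 \<le> r2"
  shows "contour_integral (circlepath 0 r2) f = contour_integral (circlepath 0 r1) f"
proof (rule Cauchy_theorem_homotopic_loops[where S="-K"])
  show "open (- K)" using K by (simp add: finite_imp_closed open_Compl)
  show "homotopic_loops (- K) (circlepath 0 r2) (circlepath 0 r1)"
  proof (rule homotopic_loops_linear)
    fix t :: real assume t: "t \<in> {0..1}"
    define e where "e = exp (2 * of_real pi * \<i> * of_real t)"
    have ne: "norm e = 1" unfolding e_def by (simp add: norm_exp_eq_Re)
    show "closed_segment (circlepath 0 r2 t) (circlepath 0 r1 t) \<subseteq> - K"
    proof
      fix w assume "w \<in> closed_segment (circlepath 0 r2 t) (circlepath 0 r1 t)"
      then obtain u where u: "0 \<le> u" "u \<le> 1" and w: "w = (1 - u) *\<^sub>R (r2 * e) + u *\<^sub>R (r1 * e)"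
        unfolding closed_segment_def circlepath e_def by auto
      have "w = complex_of_real ((1 - u) * r2 + u * r1) * e"
        by (simp add: w scaleR_conv_of_real algebra_simps)
      then have "norm w = norm (complex_of_real ((1 - u) * r2 + u * r1)) * norm e"
        by (metis norm_mult)
      also have "\<dots> = (1 - u) * r2 + u * r1" using ne u r
        by (simp only: norm_of_real) (simp add: abs_of_nonneg)
      also have "\<dots> \<ge> r1" using u r
      proof -
        have "(1-u)*r1 \<le> (1-u)*r2" using u r by (intro mult_left_mono) auto
        then show ?thesis by (simp add: algebra_simps)
      qed
      finally have "norm w \<ge> r1" .
      then show "w \<in> - K" using Kr by force
    qed
  qed auto
qed (use f in auto)

lemma prod_deriv:
  fixes x :: "nat \<Rightarrow> complex"
  assumes "finite A" "z \<notin> x ` A"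
  shows "((\<lambda>z. \<Prod>j\<in>A. (z - x j)) has_field_derivative
           (\<Prod>j\<in>A. (z - x j)) * (\<Sum>j\<in>A. 1 / (z - x j))) (at z)"
  using assms
proof (induction A rule: finite_induct)
  case empty
  then show ?case by simp
next
  case (insert a A)
  have nz: "z - x a \<noteq> 0" using insert by auto
  have "((\<lambda>z. (z - x a) * (\<Prod>j\<in>A. (z - x j))) has_field_derivative
     1 * (\<Prod>j\<in>A. (z - x j)) + (z - x a) * ((\<Prod>j\<in>A. (z - x j)) * (\<Sum>j\<in>A. 1 / (z - x j)))) (at z)"
    using insert by (intro DERIV_mult derivative_eq_intros) auto
  moreover have "1 * (\<Prod>j\<in>A. (z - x j)) + (z - x a) * ((\<Prod>j\<in>A. (z - x j)) * (\<Sum>j\<in>A. 1 / (z - x j)))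
     = ((z - x a) * (\<Prod>j\<in>A. (z - x j))) * (1 / (z - x a) + (\<Sum>j\<in>A. 1 / (z - x j)))"
    using nz by (simp add: field_simps)
  ultimately show ?case using insert by simp
qed

lemma deriv_param:
  fixes h :: "complex \<Rightarrow> complex" and r :: real
  assumes hc: "continuous_on {0..1} (\<lambda>t. h (circlepath 0 r t))"
    and hnz: "\<And>t. t \<in> {0..1} \<Longrightarrow> h (circlepath 0 r t) \<noteq> 0"
  shows "((\<lambda>s. contour_integral (circlepath 0 r) (\<lambda>z. exp (complex_of_real (- s) * z) / h z))
     has_vector_derivative contour_integral (circlepath 0 r) (\<lambda>z. - z * exp (complex_of_real (- \<tau>) * z) / h z)) (at \<tau>)"
proof -
  define g where "g = circlepath 0 r"
  define d where "d = (\<lambda>t::real. 2 * pi * \<i> * r * exp(2 * of_real pi * \<i> * t))"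
  have gc: "continuous_on {0..1} g" unfolding g_def circlepath by (intro continuous_intros)
  have dc: "continuous_on {0..1} d" unfolding d_def by (intro continuous_intros)
  have hc2: "continuous_on (UNIV \<times> {0..1}) (\<lambda>p. h (g (snd p)))"
    by (rule continuous_on_compose2[OF hc[folded g_def], of _ snd]) (auto intro: continuous_intros)
  have gc2: "continuous_on (UNIV \<times> {0..1}) (\<lambda>p. g (snd p))"
    by (rule continuous_on_compose2[OF gc, of _ snd]) (auto intro: continuous_intros)
  have dc2: "continuous_on (UNIV \<times> {0..1}) (\<lambda>p. d (snd p))"
    by (rule continuous_on_compose2[OF dc, of _ snd]) (auto intro: continuous_intros)
  have eq: "contour_integral g F = integral (cbox 0 1) (\<lambda>t. F (g t) * d t)" for F
    unfolding contour_integral_integral g_def d_def vector_derivative_circlepath by simp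
  have "((\<lambda>s. integral (cbox 0 1) (\<lambda>t. exp (complex_of_real (- s) * g t) / h (g t) * d t))
     has_vector_derivative integral (cbox 0 1) (\<lambda>t. - g t * exp (complex_of_real (- \<tau>) * g t) / h (g t) * d t)) (at \<tau> within UNIV)"
  proof (rule leibniz_rule_vector_derivative)
    fix s :: real and t :: real assume "s \<in> UNIV" "t \<in> cbox 0 1"
    then have "h (g t) \<noteq> 0" using hnz g_def by auto
    then have "((\<lambda>w. exp (- w * g t) / h (g t) * d t) has_field_derivative
          - g t * exp (- complex_of_real s * g t) / h (g t) * d t) (at (complex_of_real s))"
      by (auto intro!: derivative_eq_intros simp: field_simps)
    from has_vector_derivative_real_field[OF this]
    show "((\<lambda>s. exp (complex_of_real (- s) * g t) / h (g t) * d t) has_vector_derivative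
          - g t * exp (complex_of_real (- s) * g t) / h (g t) * d t) (at s within UNIV)"
      by simp
  next
    fix s :: real
    have "continuous_on {0..1} (\<lambda>t. exp (complex_of_real (- s) * g t) / h (g t) * d t)"
      using hnz unfolding g_def by (intro continuous_intros gc[unfolded g_def] hc dc) auto
    then show "(\<lambda>t. exp (complex_of_real (- s) * g t) / h (g t) * d t) integrable_on cbox 0 1"
      by (simp add: integrable_continuous_real)
  next
    show "continuous_on (UNIV \<times> cbox 0 1)
       (\<lambda>(s, t). - g t * exp (complex_of_real (- s) * g t) / h (g t) * d t)"
      unfolding case_prod_beta cbox_interval
      using hnz g_def by (intro continuous_intros hc2 gc2 dc2) auto
  qed auto
  then show ?thesis unfolding g_def[symmetric] eq by simp
qed

lemma prod_list_conv: "prod_list (map f (map x [0..<n])) = (\<Prod>j<n. f (x j))"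
  by (induction n) (auto simp: mult.commute)

lemma sum_list_conv: "sum_list (map f (map x [0..<n])) = (\<Sum>j<n. f (x j))"
  by (induction n) (auto simp: add.commute)

theorem lemma2:
  fixes x :: "nat \<Rightarrow> complex" and q :: nat and \<tau> :: real
  shows "(\<Sum>j\<le>q. x j * exp_divdiff (- \<tau>) (map x [0..<Suc q] @ [x j]))
       = complex_of_real \<tau> * vector_derivative (\<lambda>s. exp_divdiff (- s) (map x [0..<Suc q])) (at \<tau>)
         - of_nat q * exp_divdiff (- \<tau>) (map x [0..<Suc q])"
proof -
  define L where "L = map x [0..<Suc q]"
  define P where "P = (\<lambda>z. \<Prod>j\<le>q. (z - x j))"
  define R0 where "R0 = 1 + (\<Sum>j\<le>q. norm (x j))"
  define K where "K = x ` {..q}"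
  define E where "E = (\<lambda>z. exp (complex_of_real (- \<tau>) * z))"
  define C where "C = circlepath 0 R0"
  define c where "c = 2 * complex_of_real pi * \<i>"
  have lsuc: "{..<Suc q} = {..q}" by auto
  have PL: "(\<Prod>y\<leftarrow>L. (z - y)) = P z" for z
    unfolding L_def P_def prod_list_conv lsuc ..
  have SL: "(\<Sum>y\<leftarrow>L. norm y) = R0 - 1"
    unfolding L_def R0_def sum_list_conv lsuc by simp
  have R0pos: "R0 > 0" unfolding R0_def by (simp add: add_pos_nonneg sum_nonneg)
  have Kr: "norm y < R0" if yK: "y \<in> K" for y
  proof -
    obtain j where j: "j \<le> q" "y = x j" using yK K_def by auto
    have "norm (x j) \<le> (\<Sum>j\<le>q. norm (x j))"
      using j by (intro member_le_sum) auto
    then show ?thesis using j R0_def by simp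
  qed
  have finK: "finite K" unfolding K_def by simp
  have openK: "open (- K)" using finK by (simp add: finite_imp_closed open_Compl)
  have PNZ: "P z \<noteq> 0" if "z \<notin> K" for z
    using that unfolding P_def K_def by auto
  have Pc: "continuous_on S P" for S unfolding P_def by (intro continuous_intros)
  have Ph: "P holomorphic_on S" for S unfolding P_def by (intro holomorphic_intros)
  have imgC: "path_image C \<subseteq> - K"
    using Kr R0pos unfolding C_def by (force simp: dist_norm)
  have vC: "valid_path C" "pathfinish C = pathstart C" unfolding C_def by auto
  define I where "I = (\<lambda>j. contour_integral C (\<lambda>z. E z / (P z * (z - x j))))"
  have holj: "(\<lambda>z. E z / (P z * (z - x j))) holomorphic_on - K" if "j \<le> q" for j
    unfolding E_def using PNZ that K_def by (intro holomorphic_intros Ph) auto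
  have termj: "exp_divdiff (- \<tau>) (L @ [x j]) = I j / c" if "j \<le> q" for j
  proof -
    have "exp_divdiff (- \<tau>) (L @ [x j]) =
       contour_integral (circlepath 0 (R0 + norm (x j))) (\<lambda>z. E z / (P z * (z - x j))) / c"
      unfolding exp_divdiff_def c_def E_def using SL PL by simp
    also have "contour_integral (circlepath 0 (R0 + norm (x j))) (\<lambda>z. E z / (P z * (z - x j)))
       = I j"
      unfolding I_def C_def using finK holj[OF that] Kr R0pos by (intro circ_indep) auto
    finally show ?thesis .
  qed
  define A where "A = contour_integral C (\<lambda>z. - z * E z / P z)"
  define B where "B = contour_integral C (\<lambda>z. E z / P z)"
  have base: "exp_divdiff (- \<tau>) L = B / c"
    unfolding exp_divdiff_def c_def E_def B_def C_def using SL PL by simp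
  have der: "vector_derivative (\<lambda>s. exp_divdiff (- s) L) (at \<tau>) = A / c"
  proof -
    have "((\<lambda>s. contour_integral C (\<lambda>z. exp (complex_of_real (- s) * z) / P z))
     has_vector_derivative A) (at \<tau>)"
      unfolding A_def C_def E_def
    proof (rule deriv_param)
      show "continuous_on {0..1} (\<lambda>t. P (circlepath 0 R0 t))"
        by (rule continuous_on_compose2[OF Pc]) (auto simp: circlepath intro!: continuous_intros)
      show "P (circlepath 0 R0 t) \<noteq> 0" if "t \<in> {0..1}" for t
        using imgC that unfolding C_def path_image_def by (intro PNZ) blast
    qed
    then have "((\<lambda>s. exp_divdiff (- s) L) has_vector_derivative A / c) (at \<tau>)"
      unfolding exp_divdiff_def PL SL C_def c_def by (intro has_vector_derivative_divide) simp
    then show ?thesis by (rule vector_derivative_at)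
  qed
  define S where "S = (\<lambda>z. \<Sum>j\<le>q. 1 / (z - x j))"
  define G' where "G' = (\<lambda>z. ((1 * E z + z * (complex_of_real (- \<tau>) * E z)) * P z - z * E z * (P z * S z)) / (P z * P z))"
  have Gd: "((\<lambda>z. z * E z / P z) has_field_derivative G' z) (at z within - K)" if "z \<in> - K" for z
  proof -
    have "(P has_field_derivative P z * S z) (at z)"
      unfolding P_def S_def using that K_def by (intro prod_deriv) auto
    moreover have "(E has_field_derivative complex_of_real (- \<tau>) * E z) (at z)"
      unfolding E_def by (auto intro!: derivative_eq_intros)
    ultimately have "((\<lambda>z. z * E z / P z) has_field_derivative
       ((1 * E z + (complex_of_real (- \<tau>) * E z) * z) * P z - z * E z * (P z * S z)) / (P z * P z)) (at z)"
      using PNZ that by (intro DERIV_divide DERIV_mult DERIV_ident) auto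
    moreover have "((1 * E z + (complex_of_real (- \<tau>) * E z) * z) * P z - z * E z * (P z * S z)) / (P z * P z) = G' z"
      unfolding G'_def by (simp add: algebra_simps)
    ultimately have "((\<lambda>z. z * E z / P z) has_field_derivative G' z) (at z)" by simp
    then show ?thesis by (rule has_field_derivative_at_within)
  qed
  have G0: "(G' has_contour_integral 0) C"
    using contour_integral_primitive[OF Gd vC(1) imgC] vC(2) by simp
  have hA: "((\<lambda>z. - z * E z / P z) has_contour_integral A) C"
    unfolding A_def using PNZ openK vC imgC unfolding E_def
    by (intro has_contour_integral_integral contour_integrable_holomorphic_simple[where S="-K"]
        holomorphic_intros Ph) auto
  have hB: "((\<lambda>z. E z / P z) has_contour_integral B) C"
    unfolding B_def using PNZ openK vC imgC unfolding E_def
    by (intro has_contour_integral_integral contour_integrable_holomorphic_simple[where S="-K"]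
        holomorphic_intros Ph) auto
  have comb: "((\<lambda>z. - G' z + complex_of_real \<tau> * (- z * E z / P z) - of_nat q * (E z / P z))
      has_contour_integral (- 0 + complex_of_real \<tau> * A - of_nat q * B)) C"
    by (intro has_contour_integral_diff has_contour_integral_add has_contour_integral_neg
        has_contour_integral_lmul G0 hA hB)
  have ident: "(\<Sum>j\<le>q. x j * (E z / (P z * (z - x j))))
      = - G' z + complex_of_real \<tau> * (- z * E z / P z) - of_nat q * (E z / P z)" if "z \<in> - K" for z
  proof -
    have nz: "z - x j \<noteq> 0" if "j \<le> q" for j using \<open>z \<in> - K\<close> that K_def by auto
    have Pnz: "P z \<noteq> 0" using PNZ that by auto
    have "(\<Sum>j\<le>q. x j * (E z / (P z * (z - x j)))) = (\<Sum>j\<le>q. E z / P z * (z * (1 / (z - x j)) - 1))"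
      using nz Pnz by (intro sum.cong refl) (simp add: field_simps)
    also have "\<dots> = E z / P z * (\<Sum>j\<le>q. (z * (1 / (z - x j)) - 1))"
      by (rule sum_distrib_left[symmetric])
    also have "\<dots> = E z / P z * (z * S z - of_nat (Suc q))"
      unfolding S_def sum_subtractf sum_distrib_left by simp
    also have "\<dots> = - G' z + complex_of_real \<tau> * (- z * E z / P z) - of_nat q * (E z / P z)"
      unfolding G'_def using Pnz by (simp add: field_simps)
    finally show ?thesis .
  qed
  have hsum: "((\<lambda>z. \<Sum>j\<le>q. x j * (E z / (P z * (z - x j)))) has_contour_integral (\<Sum>j\<le>q. x j * I j)) C"
    unfolding I_def using holj openK vC imgC
    by (intro has_contour_integral_sum has_contour_integral_lmul has_contour_integral_integral
        contour_integrable_holomorphic_simple[where S="-K"]) auto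
  have hsum2: "((\<lambda>z. \<Sum>j\<le>q. x j * (E z / (P z * (z - x j)))) has_contour_integral
       (- 0 + complex_of_real \<tau> * A - of_nat q * B)) C"
    using has_contour_integral_eq[OF comb] ident imgC by (metis (no_types, lifting) subsetD)
  have key: "(\<Sum>j\<le>q. x j * I j) = complex_of_real \<tau> * A - of_nat q * B"
    using has_contour_integral_unique[OF hsum hsum2] by simp
  have "(\<Sum>j\<le>q. x j * exp_divdiff (- \<tau>) (L @ [x j])) = (\<Sum>j\<le>q. x j * I j) / c"
    using termj by (simp add: sum_divide_distrib)
  also have "\<dots> = complex_of_real \<tau> * (A / c) - of_nat q * (B / c)"
    unfolding key by (simp add: diff_divide_distrib)
  finally show ?thesis unfolding L_def[symmetric] der base .
qed

end
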